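(* Let $\epsilon\in[0,1]$, let $\theta$ be any softmax parameter, and let $\hat\xi=(\hat\xi_1,\dots,\hat\xi_n)$ be the $\epsilon$-exploration policy of $\xi^\theta$, i.e. $\hat\xi_i(a_i\mid s_i)=(1-\epsilon)\xi_i^{\theta_i}(a_i\mid s_i)+\epsilon/|\mathcal A_i|$ for all $i,s_i,a_i$. Then for every agent $i$, $$\max_{s\in\mathcal S,\,a_i\in\mathcal A_i}\left|\overline Q_i^{\hat\xi}(s,a_i)-\overline Q_i^{\xi^\theta}(s,a_i)\right|\le\frac{6n\epsilon}{(1-\gamma)^2}.$$
   Context: Networked Markov game. There are $n$ agents $\mathcal N=\{1,\dots,n\}$ placed at the nodes of an undirected graph $\mathcal G=(\mathcal N,\mathcal E)$ with graph distance $\mathrm{dist}$. For an integer $\kappa\ge0$, $N_i^\kappa=\{j\in\mathcal N:\mathrm{dist}(i,j)\le\kappa\}$ (so $i\in N_i^\kappa$), $\mathcal N_i=N_i^1$, $-N_i^\kappa=\mathcal N\setminus N_i^\kappa$, and $n(\kappa)=\max_i|N_i^\kappa|$. Agent $i$ has a finite local state space $\mathcal S_i$ and a finite local action space $\mathcal A_i$; $\mathcal S=\prod_i\mathcal S_i$, $\mathcal A=\prod_i\mathcal A_i$, and for $I\subseteq\mathcal N$ we write $s_I,a_I,\mathcal S_I,\mathcal A_I$ for the joint states/actions/spaces of the agents in $I$ (the subscript $-i$ means $\mathcal N\setminus\{i\}$). The dynamics are $\mathcal P(s'\mid s,a)=\prod_i\mathcal P_i(s_i'\mid s_{\mathcal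 N_i},a_i)$, the initial distribution is $\mu\in\Delta(\mathcal S)$, and $\gamma\in(0,1)$ is a discount factor. Each agent has a reward $r_i:\mathcal S\times\mathcal A\to[0,1]$ depending only on $(s_{N_i^{\kappa_r}},a_{N_i^{\kappa_r}})$ for a fixed integer $\kappa_r\ge0$. A joint policy $\xi=(\xi_1,\dots,\xi_n)$ acts by $\xi(a\mid s)=\prod_i\xi_i(a_i\mid s_i)$. For a joint policy $\xi$: $Q_i^\xi(s,a)=\sum_{t\ge0}\gamma^t\mathbb E_\xi[r_i(s(t),a(t))\mid s(0)=s,a(0)=a]$; $\overline Q_i^\xi(s,a_i)=\mathbb E_{a_{-i}\sim\xi_{-i}(\cdot\mid s_{-i})}Q_i^\xi(s,a_i,a_{-i})$. Softmax policies: for $\theta_i\in\mathbb R^{|\mathcal S_i||\mathcal A_i|}$, $\xi_i^{\theta_i}(a_i\mid s_i)=\exp(\theta_{i,s_i,a_i})/\sum_{a_i'\in\mathcal A_i}\exp(\theta_{i,s_i,a_i'})$; $\xi^\theta=(\xi_1^{\theta_1},\dots,\xi_n^{\theta_n})$. *)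

theory Defs
  imports "HOL-Analysis.Analysis"
begin

definition agents :: "nat \<Rightarrow> nat set" where
  "agents n = {0..<n}"

definition edge_rel :: "nat \<Rightarrow> (nat \<Rightarrow> nat \<Rightarrow> bool) \<Rightarrow> nat \<Rightarrow> nat \<Rightarrow> bool" where
  "edge_rel n E x y \<longleftrightarrow> x < n \<and> y < n \<and> E x y"

definition nbhd :: "nat \<Rightarrow> (nat \<Rightarrow> nat \<Rightarrow> bool) \<Rightarrow> nat \<Rightarrow> nat \<Rightarrow> nat set" where
  "nbhd n E k i = {j \<in> agents n. \<exists>m\<le>k. (edge_rel n E ^^ m) i j}"

definition jS :: "nat \<Rightarrow> (nat \<Rightarrow> 's set) \<Rightarrow> (nat \<Rightarrow> 's) set" where
  "jS n S = PiE (agents n) S"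

definition jA :: "nat \<Rightarrow> (nat \<Rightarrow> 'a set) \<Rightarrow> (nat \<Rightarrow> 'a) set" where
  "jA n A = PiE (agents n) A"

definition trans :: "nat \<Rightarrow> (nat \<Rightarrow> (nat \<Rightarrow> 's) \<Rightarrow> 'a \<Rightarrow> 's \<Rightarrow> real)
    \<Rightarrow> (nat \<Rightarrow> 's) \<Rightarrow> (nat \<Rightarrow> 'a) \<Rightarrow> (nat \<Rightarrow> 's) \<Rightarrow> real" where
  "trans n P s a s' = (\<Prod>i\<in>agents n. P i s (a i) (s' i))"

definition jpol :: "nat \<Rightarrow> (nat \<Rightarrow> 's \<Rightarrow> 'a \<Rightarrow> real) \<Rightarrow> (nat \<Rightarrow> 's) \<Rightarrow> (nat \<Rightarrow> 'a) \<Rightarrow> real" where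
  "jpol n \<xi> s a = (\<Prod>i\<in>agents n. \<xi> i (s i) (a i))"

text \<open>occ n S A P xi t s0 a0 s a = Pr_xi[(s(t),a(t)) = (s,a) | s(0)=s0, a(0)=a0].\<close>
primrec occ :: "nat \<Rightarrow> (nat \<Rightarrow> 's set) \<Rightarrow> (nat \<Rightarrow> 'a set)
    \<Rightarrow> (nat \<Rightarrow> (nat \<Rightarrow> 's) \<Rightarrow> 'a \<Rightarrow> 's \<Rightarrow> real) \<Rightarrow> (nat \<Rightarrow> 's \<Rightarrow> 'a \<Rightarrow> real)
    \<Rightarrow> nat \<Rightarrow> (nat \<Rightarrow> 's) \<Rightarrow> (nat \<Rightarrow> 'a) \<Rightarrow> (nat \<Rightarrow> 's) \<Rightarrow> (nat \<Rightarrow> 'a) \<Rightarrow> real" where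
  "occ n S A P \<xi> 0 s0 a0 s a = (if s = s0 \<and> a = a0 then 1 else 0)"
| "occ n S A P \<xi> (Suc t) s0 a0 s' a' =
     (\<Sum>s\<in>jS n S. \<Sum>a\<in>jA n A. occ n S A P \<xi> t s0 a0 s a * trans n P s a s' * jpol n \<xi> s' a')"

definition Qfun :: "nat \<Rightarrow> (nat \<Rightarrow> 's set) \<Rightarrow> (nat \<Rightarrow> 'a set)
    \<Rightarrow> (nat \<Rightarrow> (nat \<Rightarrow> 's) \<Rightarrow> 'a \<Rightarrow> 's \<Rightarrow> real)
    \<Rightarrow> (nat \<Rightarrow> (nat \<Rightarrow> 's) \<Rightarrow> (nat \<Rightarrow> 'a) \<Rightarrow> real) \<Rightarrow> real
    \<Rightarrow> (nat \<Rightarrow> 's \<Rightarrow> 'a \<Rightarrow> real) \<Rightarrow> nat \<Rightarrow> (nat \<Rightarrow> 's) \<Rightarrow> (nat \<Rightarrow> 'a) \<Rightarrow> real" where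
  "Qfun n S A P r \<gamma> \<xi> i s0 a0 =
     (\<Sum>t. \<gamma> ^ t * (\<Sum>s\<in>jS n S. \<Sum>a\<in>jA n A. occ n S A P \<xi> t s0 a0 s a * r i s a))"

definition Qbar :: "nat \<Rightarrow> (nat \<Rightarrow> 's set) \<Rightarrow> (nat \<Rightarrow> 'a set)
    \<Rightarrow> (nat \<Rightarrow> (nat \<Rightarrow> 's) \<Rightarrow> 'a \<Rightarrow> 's \<Rightarrow> real)
    \<Rightarrow> (nat \<Rightarrow> (nat \<Rightarrow> 's) \<Rightarrow> (nat \<Rightarrow> 'a) \<Rightarrow> real) \<Rightarrow> real
    \<Rightarrow> (nat \<Rightarrow> 's \<Rightarrow> 'a \<Rightarrow> real) \<Rightarrow> nat \<Rightarrow> (nat \<Rightarrow> 's) \<Rightarrow> 'a \<Rightarrow> real" where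
  "Qbar n S A P r \<gamma> \<xi> i s ai =
     (\<Sum>a\<in>{a \<in> jA n A. a i = ai}.
        (\<Prod>j\<in>agents n - {i}. \<xi> j (s j) (a j)) * Qfun n S A P r \<gamma> \<xi> i s a)"

definition softmax :: "(nat \<Rightarrow> 'a set) \<Rightarrow> (nat \<Rightarrow> 's \<Rightarrow> 'a \<Rightarrow> real) \<Rightarrow> nat \<Rightarrow> 's \<Rightarrow> 'a \<Rightarrow> real" where
  "softmax A \<theta> i si ai = exp (\<theta> i si ai) / (\<Sum>b\<in>A i. exp (\<theta> i si b))"

definition explore :: "(nat \<Rightarrow> 'a set) \<Rightarrow> real \<Rightarrow> (nat \<Rightarrow> 's \<Rightarrow> 'a \<Rightarrow> real) \<Rightarrow> nat \<Rightarrow> 's \<Rightarrow> 'a \<Rightarrow> real" where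
  "explore A \<epsilon> \<xi> i si ai = (1 - \<epsilon>) * \<xi> i si ai + \<epsilon> / real (card (A i))"

end

theory Submission
  imports Defs
begin

lemma sum_PiE_insert:
  assumes "x \<notin> I"
  shows "(\<Sum>g\<in>PiE (insert x I) B. F g) = (\<Sum>y\<in>B x. \<Sum>g\<in>PiE I B. F (g(x:=y)))"
proof -
  have "(\<Sum>g\<in>PiE (insert x I) B. F g) = (\<Sum>p\<in>B x \<times> PiE I B. F ((\<lambda>(y,g). g(x:=y)) p))"
    unfolding PiE_insert_eq by (subst sum.reindex[OF inj_combinator[OF assms]]) (simp add: o_def)
  also have "\<dots> = (\<Sum>y\<in>B x. \<Sum>g\<in>PiE I B. F (g(x:=y)))"
    by (simp add: sum.cartesian_product split_def)
  finally show ?thesis .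
qed

lemma prod_L1:
  fixes p q :: "'i \<Rightarrow> 'b \<Rightarrow> real"
  assumes "finite I" "\<And>j. j\<in>I \<Longrightarrow> finite (B j)"
    "\<And>j b. j\<in>I \<Longrightarrow> b\<in>B j \<Longrightarrow> 0 \<le> p j b" "\<And>j b. j\<in>I \<Longrightarrow> b\<in>B j \<Longrightarrow> 0 \<le> q j b"
    "\<And>j. j\<in>I \<Longrightarrow> sum (p j) (B j) = 1" "\<And>j. j\<in>I \<Longrightarrow> sum (q j) (B j) = 1"
  shows "(\<Sum>g\<in>PiE I B. \<bar>(\<Prod>j\<in>I. p j (g j)) - (\<Prod>j\<in>I. q j (g j))\<bar>) \<le> (\<Sum>j\<in>I. \<Sum>b\<in>B j. \<bar>p j b - q j b\<bar>)"
  using assms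
proof (induction I rule: finite_induct)
  case empty
  then show ?case by simp
next
  case (insert x I)
  define PP where "PP = (\<lambda>g. \<Prod>j\<in>I. p j (g j))"
  define QQ where "QQ = (\<lambda>g. \<Prod>j\<in>I. q j (g j))"
  have sumP: "(\<Sum>g\<in>PiE I B. PP g) = 1"
    unfolding PP_def using insert by (subst prod_sum_PiE[symmetric]) (auto intro!: prod.neutral)
  have IH: "(\<Sum>g\<in>PiE I B. \<bar>PP g - QQ g\<bar>) \<le> (\<Sum>j\<in>I. \<Sum>b\<in>B j. \<bar>p j b - q j b\<bar>)"
    unfolding PP_def QQ_def using insert by (intro insert.IH) auto
  have Pnn: "\<And>g. g \<in> PiE I B \<Longrightarrow> 0 \<le> PP g"
    unfolding PP_def using insert by (auto intro!: prod_nonneg simp: PiE_iff)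
  have eqp: "\<And>g y. (\<Prod>j\<in>insert x I. p j ((g(x:=y)) j)) = p x y * PP g"
    unfolding PP_def using insert by (auto intro!: prod.cong)
  have eqq: "\<And>g y. (\<Prod>j\<in>insert x I. q j ((g(x:=y)) j)) = q x y * QQ g"
    unfolding QQ_def using insert by (auto intro!: prod.cong)
  have "(\<Sum>g\<in>PiE (insert x I) B. \<bar>(\<Prod>j\<in>insert x I. p j (g j)) - (\<Prod>j\<in>insert x I. q j (g j))\<bar>)
      = (\<Sum>y\<in>B x. \<Sum>g\<in>PiE I B. \<bar>p x y * PP g - q x y * QQ g\<bar>)"
    using insert(2) by (subst sum_PiE_insert) (simp_all only: eqp eqq not_False_eq_True)
  also have "\<dots> \<le> (\<Sum>y\<in>B x. \<Sum>g\<in>PiE I B. \<bar>p x y - q x y\<bar> * PP g + q x y * \<bar>PP g - QQ g\<bar>)"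
  proof (intro sum_mono)
    fix y g assume y: "y \<in> B x" and g: "g \<in> PiE I B"
    have "p x y * PP g - q x y * QQ g = (p x y - q x y) * PP g + q x y * (PP g - QQ g)"
      by (simp add: algebra_simps)
    also have "\<bar>\<dots>\<bar> \<le> \<bar>p x y - q x y\<bar> * PP g + q x y * \<bar>PP g - QQ g\<bar>"
      using Pnn[OF g] insert.prems(3)[of x y] y
      by (auto intro!: order.trans[OF abs_triangle_ineq] simp: abs_mult)
    finally show "\<bar>p x y * PP g - q x y * QQ g\<bar> \<le> \<bar>p x y - q x y\<bar> * PP g + q x y * \<bar>PP g - QQ g\<bar>" .
  qed
  also have "\<dots> = (\<Sum>y\<in>B x. \<bar>p x y - q x y\<bar> * (\<Sum>g\<in>PiE I B. PP g) + q x y * (\<Sum>g\<in>PiE I B. \<bar>PP g - QQ g\<bar>))"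
    by (simp add: sum.distrib sum_distrib_left)
  also have "\<dots> = (\<Sum>y\<in>B x. \<bar>p x y - q x y\<bar>) + (\<Sum>y\<in>B x. q x y) * (\<Sum>g\<in>PiE I B. \<bar>PP g - QQ g\<bar>)"
    by (simp add: sumP sum.distrib sum_distrib_right)
  also have "\<dots> \<le> (\<Sum>y\<in>B x. \<bar>p x y - q x y\<bar>) + (\<Sum>j\<in>I. \<Sum>b\<in>B j. \<bar>p j b - q j b\<bar>)"
    using IH insert.prems(5)[of x] by simp
  also have "\<dots> = (\<Sum>j\<in>insert x I. \<Sum>b\<in>B j. \<bar>p j b - q j b\<bar>)"
    using insert by simp
  finally show ?case .
qed

lemma sum_swap4:
  "(\<Sum>x\<in>X. \<Sum>y\<in>Y. \<Sum>u\<in>U. \<Sum>v\<in>V. f x y u v) = (\<Sum>u\<in>U. \<Sum>v\<in>V. \<Sum>x\<in>X. \<Sum>y\<in>Y. f x y u v)"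
proof -
  have "(\<Sum>x\<in>X. \<Sum>y\<in>Y. \<Sum>u\<in>U. \<Sum>v\<in>V. f x y u v) = (\<Sum>x\<in>X. \<Sum>u\<in>U. \<Sum>y\<in>Y. \<Sum>v\<in>V. f x y u v)"
    by (rule sum.cong[OF refl], rule sum.swap)
  also have "\<dots> = (\<Sum>u\<in>U. \<Sum>x\<in>X. \<Sum>y\<in>Y. \<Sum>v\<in>V. f x y u v)"
    by (rule sum.swap)
  also have "\<dots> = (\<Sum>u\<in>U. \<Sum>x\<in>X. \<Sum>v\<in>V. \<Sum>y\<in>Y. f x y u v)"
    by (rule sum.cong[OF refl], rule sum.cong[OF refl], rule sum.swap)
  also have "\<dots> = (\<Sum>u\<in>U. \<Sum>v\<in>V. \<Sum>x\<in>X. \<Sum>y\<in>Y. f x y u v)"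
    by (rule sum.cong[OF refl], rule sum.swap)
  finally show ?thesis .
qed

locale mg =
  fixes n :: nat and S :: "nat \<Rightarrow> 's set" and A :: "nat \<Rightarrow> 'a set"
    and P :: "nat \<Rightarrow> (nat \<Rightarrow> 's) \<Rightarrow> 'a \<Rightarrow> 's \<Rightarrow> real"
  assumes S_fin: "\<And>j. j < n \<Longrightarrow> finite (S j) \<and> S j \<noteq> {}"
    and A_fin: "\<And>j. j < n \<Longrightarrow> finite (A j) \<and> A j \<noteq> {}"
    and P_nonneg: "\<And>j s b x. j < n \<Longrightarrow> s \<in> jS n S \<Longrightarrow> b \<in> A j \<Longrightarrow> x \<in> S j \<Longrightarrow> P j s b x \<ge> 0"
    and P_sum: "\<And>j s b. j < n \<Longrightarrow> s \<in> jS n S \<Longrightarrow> b \<in> A j \<Longrightarrow> (\<Sum>x\<in>S j. P j s b x) = 1"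
begin

definition pol :: "(nat \<Rightarrow> 's \<Rightarrow> 'a \<Rightarrow> real) \<Rightarrow> bool" where
  "pol \<xi> \<longleftrightarrow> (\<forall>j<n. \<forall>x. (\<forall>b\<in>A j. 0 \<le> \<xi> j x b) \<and> sum (\<xi> j x) (A j) = 1)"

lemma fin_jS: "finite (jS n S)"
  unfolding jS_def agents_def using S_fin by (intro finite_PiE) auto

lemma fin_jA: "finite (jA n A)"
  unfolding jA_def agents_def using A_fin by (intro finite_PiE) auto

lemma jpol_nonneg: "pol \<xi> \<Longrightarrow> a \<in> jA n A \<Longrightarrow> 0 \<le> jpol n \<xi> s a"
  unfolding jpol_def pol_def jA_def agents_def by (auto intro!: prod_nonneg simp: PiE_iff)

lemma jpol_sum: "pol \<xi> \<Longrightarrow> (\<Sum>a\<in>jA n A. jpol n \<xi> s a) = 1"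
  unfolding jpol_def jA_def pol_def
  using A_fin by (subst prod_sum_PiE[symmetric]) (auto simp: agents_def intro!: prod.neutral)

lemma trans_nonneg: "s \<in> jS n S \<Longrightarrow> a \<in> jA n A \<Longrightarrow> s' \<in> jS n S \<Longrightarrow> 0 \<le> trans n P s a s'"
  unfolding trans_def using P_nonneg
  by (auto intro!: prod_nonneg simp: PiE_iff jS_def jA_def agents_def)

lemma trans_sum: "s \<in> jS n S \<Longrightarrow> a \<in> jA n A \<Longrightarrow> (\<Sum>s'\<in>jS n S. trans n P s a s') = 1"
proof -
  assume s: "s \<in> jS n S" and a: "a \<in> jA n A"
  have "(\<Sum>s'\<in>jS n S. trans n P s a s') = (\<Prod>i\<in>agents n. \<Sum>x\<in>S i. P i s (a i) x)"
    unfolding trans_def jS_def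
    by (rule prod_sum_PiE[symmetric]) (use S_fin in \<open>auto simp: agents_def\<close>)
  also have "\<dots> = 1"
    using s a P_sum by (auto simp: agents_def jA_def PiE_iff intro!: prod.neutral)
  finally show ?thesis .
qed

lemma occ_nonneg: "pol \<xi> \<Longrightarrow> s \<in> jS n S \<Longrightarrow> a \<in> jA n A \<Longrightarrow> 0 \<le> occ n S A P \<xi> t s0 a0 s a"
proof (induction t arbitrary: s a)
  case 0
  then show ?case by simp
next
  case (Suc t)
  then show ?case
    by (auto intro!: sum_nonneg mult_nonneg_nonneg trans_nonneg jpol_nonneg)
qed

lemma occ_sum: "pol \<xi> \<Longrightarrow> s0 \<in> jS n S \<Longrightarrow> a0 \<in> jA n A \<Longrightarrow>
   (\<Sum>s\<in>jS n S. \<Sum>a\<in>jA n A. occ n S A P \<xi> t s0 a0 s a) = 1"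
proof (induction t)
  case 0
  have "\<And>s. (\<Sum>a\<in>jA n A. if s = s0 \<and> a = a0 then 1 else (0::real)) = (if s = s0 then 1 else 0)"
    using 0 fin_jA by auto
  then show ?case using 0 fin_jS by simp
next
  case (Suc t)
  have "(\<Sum>s'\<in>jS n S. \<Sum>a'\<in>jA n A. occ n S A P \<xi> (Suc t) s0 a0 s' a')
     = (\<Sum>s\<in>jS n S. \<Sum>a\<in>jA n A. \<Sum>s'\<in>jS n S. \<Sum>a'\<in>jA n A.
          occ n S A P \<xi> t s0 a0 s a * trans n P s a s' * jpol n \<xi> s' a')"
    unfolding occ.simps by (rule sum_swap4[symmetric])
  also have "\<dots> = (\<Sum>s\<in>jS n S. \<Sum>a\<in>jA n A. occ n S A P \<xi> t s0 a0 s a)"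
  proof (intro sum.cong refl)
    fix s a assume s: "s \<in> jS n S" and a: "a \<in> jA n A"
    have "(\<Sum>s'\<in>jS n S. \<Sum>a'\<in>jA n A. occ n S A P \<xi> t s0 a0 s a * trans n P s a s' * jpol n \<xi> s' a')
        = (\<Sum>s'\<in>jS n S. occ n S A P \<xi> t s0 a0 s a * trans n P s a s' * (\<Sum>a'\<in>jA n A. jpol n \<xi> s' a'))"
      by (simp add: sum_distrib_left)
    also have "\<dots> = occ n S A P \<xi> t s0 a0 s a * (\<Sum>s'\<in>jS n S. trans n P s a s')"
      using Suc.prems by (simp add: jpol_sum sum_distrib_left)
    also have "\<dots> = occ n S A P \<xi> t s0 a0 s a"
      using s a by (simp add: trans_sum)
    finally show "(\<Sum>s'\<in>jS n S. \<Sum>a'\<in>jA n A. occ n S A P \<xi> t s0 a0 s a * trans n P s a s' * jpol n \<xi> s' a')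
        = occ n S A P \<xi> t s0 a0 s a" .
  qed
  also have "\<dots> = 1" using Suc by simp
  finally show ?case .
qed

lemma occ_L1:
  assumes p1: "pol \<xi>1" and p2: "pol \<xi>2" and s0: "s0 \<in> jS n S" and a0: "a0 \<in> jA n A"
    and C: "\<And>s. (\<Sum>a\<in>jA n A. \<bar>jpol n \<xi>1 s a - jpol n \<xi>2 s a\<bar>) \<le> C"
  shows "(\<Sum>s\<in>jS n S. \<Sum>a\<in>jA n A. \<bar>occ n S A P \<xi>1 t s0 a0 s a - occ n S A P \<xi>2 t s0 a0 s a\<bar>) \<le> real t * C"
proof (induction t)
  case 0
  then show ?case by simp
next
  case (Suc t)
  define o1 where "o1 = occ n S A P \<xi>1 t s0 a0"
  define o2 where "o2 = occ n S A P \<xi>2 t s0 a0"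
  define T where "T = trans n P"
  define q1 where "q1 = jpol n \<xi>1"
  define q2 where "q2 = jpol n \<xi>2"
  have o2nn: "\<And>s a. s \<in> jS n S \<Longrightarrow> a \<in> jA n A \<Longrightarrow> 0 \<le> o2 s a"
    unfolding o2_def using p2 by (rule occ_nonneg)
  have Tnn: "\<And>s a s'. s \<in> jS n S \<Longrightarrow> a \<in> jA n A \<Longrightarrow> s' \<in> jS n S \<Longrightarrow> 0 \<le> T s a s'"
    unfolding T_def by (rule trans_nonneg)
  have q1nn: "\<And>s a. a \<in> jA n A \<Longrightarrow> 0 \<le> q1 s a"
    unfolding q1_def using p1 by (rule jpol_nonneg)
  have pt: "\<bar>(\<Sum>s\<in>jS n S. \<Sum>a\<in>jA n A. o1 s a * T s a s' * q1 s' a') - (\<Sum>s\<in>jS n S. \<Sum>a\<in>jA n A. o2 s a * T s a s' * q2 s' a')\<bar>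
     \<le> (\<Sum>s\<in>jS n S. \<Sum>a\<in>jA n A. \<bar>o1 s a - o2 s a\<bar> * T s a s' * q1 s' a' + o2 s a * T s a s' * \<bar>q1 s' a' - q2 s' a'\<bar>)"
    if s': "s' \<in> jS n S" and a': "a' \<in> jA n A" for s' a'
  proof -
    have "(\<Sum>s\<in>jS n S. \<Sum>a\<in>jA n A. o1 s a * T s a s' * q1 s' a') - (\<Sum>s\<in>jS n S. \<Sum>a\<in>jA n A. o2 s a * T s a s' * q2 s' a')
       = (\<Sum>s\<in>jS n S. \<Sum>a\<in>jA n A. o1 s a * T s a s' * q1 s' a' - o2 s a * T s a s' * q2 s' a')"
      by (simp add: sum_subtractf)
    also have "\<bar>\<dots>\<bar> \<le> (\<Sum>s\<in>jS n S. \<bar>\<Sum>a\<in>jA n A. o1 s a * T s a s' * q1 s' a' - o2 s a * T s a s' * q2 s' a'\<bar>)"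
      by (rule sum_abs)
    also have "\<dots> \<le> (\<Sum>s\<in>jS n S. \<Sum>a\<in>jA n A. \<bar>o1 s a * T s a s' * q1 s' a' - o2 s a * T s a s' * q2 s' a'\<bar>)"
      by (intro sum_mono sum_abs)
    also have "\<dots> \<le> (\<Sum>s\<in>jS n S. \<Sum>a\<in>jA n A. \<bar>o1 s a - o2 s a\<bar> * T s a s' * q1 s' a' + o2 s a * T s a s' * \<bar>q1 s' a' - q2 s' a'\<bar>)"
    proof (intro sum_mono)
      fix s a assume s: "s \<in> jS n S" and a: "a \<in> jA n A"
      have "o1 s a * T s a s' * q1 s' a' - o2 s a * T s a s' * q2 s' a'
          = (o1 s a - o2 s a) * (T s a s' * q1 s' a') + (o2 s a * T s a s') * (q1 s' a' - q2 s' a')"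
        by (simp add: algebra_simps)
      also have "\<bar>\<dots>\<bar> \<le> \<bar>o1 s a - o2 s a\<bar> * (T s a s' * q1 s' a') + (o2 s a * T s a s') * \<bar>q1 s' a' - q2 s' a'\<bar>"
        using Tnn[OF s a s'] q1nn[OF a', of s'] o2nn[OF s a]
        by (auto intro!: order.trans[OF abs_triangle_ineq] simp: abs_mult)
      finally show "\<bar>o1 s a * T s a s' * q1 s' a' - o2 s a * T s a s' * q2 s' a'\<bar>
          \<le> \<bar>o1 s a - o2 s a\<bar> * T s a s' * q1 s' a' + o2 s a * T s a s' * \<bar>q1 s' a' - q2 s' a'\<bar>"
        by (simp add: mult.assoc)
    qed
    finally show ?thesis .
  qed
  have inner: "(\<Sum>s'\<in>jS n S. \<Sum>a'\<in>jA n A. \<bar>o1 s a - o2 s a\<bar> * T s a s' * q1 s' a' + o2 s a * T s a s' * \<bar>q1 s' a' - q2 s' a'\<bar>)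
      \<le> \<bar>o1 s a - o2 s a\<bar> + o2 s a * C"
    if s: "s \<in> jS n S" and a: "a \<in> jA n A" for s a
  proof -
    have "(\<Sum>s'\<in>jS n S. \<Sum>a'\<in>jA n A. \<bar>o1 s a - o2 s a\<bar> * T s a s' * q1 s' a' + o2 s a * T s a s' * \<bar>q1 s' a' - q2 s' a'\<bar>)
        = (\<Sum>s'\<in>jS n S. \<bar>o1 s a - o2 s a\<bar> * T s a s' * (\<Sum>a'\<in>jA n A. q1 s' a') + o2 s a * T s a s' * (\<Sum>a'\<in>jA n A. \<bar>q1 s' a' - q2 s' a'\<bar>))"
      by (simp add: sum.distrib sum_distrib_left)
    also have "\<dots> \<le> (\<Sum>s'\<in>jS n S. \<bar>o1 s a - o2 s a\<bar> * T s a s' + o2 s a * T s a s' * C)"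
    proof (intro sum_mono)
      fix s' assume s': "s' \<in> jS n S"
      have "o2 s a * T s a s' * (\<Sum>a'\<in>jA n A. \<bar>q1 s' a' - q2 s' a'\<bar>) \<le> o2 s a * T s a s' * C"
        using C[of s'] o2nn[OF s a] Tnn[OF s a s'] unfolding q1_def q2_def
        by (intro mult_left_mono) auto
      then show "\<bar>o1 s a - o2 s a\<bar> * T s a s' * (\<Sum>a'\<in>jA n A. q1 s' a') + o2 s a * T s a s' * (\<Sum>a'\<in>jA n A. \<bar>q1 s' a' - q2 s' a'\<bar>)
          \<le> \<bar>o1 s a - o2 s a\<bar> * T s a s' + o2 s a * T s a s' * C"
        using p1 unfolding q1_def by (simp add: jpol_sum)
    qed
    also have "\<dots> = \<bar>o1 s a - o2 s a\<bar> * (\<Sum>s'\<in>jS n S. T s a s') + o2 s a * C * (\<Sum>s'\<in>jS n S. T s a s')"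
      by (simp add: sum.distrib sum_distrib_left sum_distrib_right mult_ac)
    also have "\<dots> = \<bar>o1 s a - o2 s a\<bar> + o2 s a * C"
      using s a unfolding T_def by (simp add: trans_sum)
    finally show ?thesis .
  qed
  have "(\<Sum>s'\<in>jS n S. \<Sum>a'\<in>jA n A. \<bar>occ n S A P \<xi>1 (Suc t) s0 a0 s' a' - occ n S A P \<xi>2 (Suc t) s0 a0 s' a'\<bar>)
     = (\<Sum>s'\<in>jS n S. \<Sum>a'\<in>jA n A. \<bar>(\<Sum>s\<in>jS n S. \<Sum>a\<in>jA n A. o1 s a * T s a s' * q1 s' a') - (\<Sum>s\<in>jS n S. \<Sum>a\<in>jA n A. o2 s a * T s a s' * q2 s' a')\<bar>)"
    unfolding o1_def o2_def T_def q1_def q2_def by simp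
  also have "\<dots> \<le> (\<Sum>s'\<in>jS n S. \<Sum>a'\<in>jA n A. \<Sum>s\<in>jS n S. \<Sum>a\<in>jA n A. \<bar>o1 s a - o2 s a\<bar> * T s a s' * q1 s' a' + o2 s a * T s a s' * \<bar>q1 s' a' - q2 s' a'\<bar>)"
    by (intro sum_mono pt)
  also have "\<dots> = (\<Sum>s\<in>jS n S. \<Sum>a\<in>jA n A. \<Sum>s'\<in>jS n S. \<Sum>a'\<in>jA n A. \<bar>o1 s a - o2 s a\<bar> * T s a s' * q1 s' a' + o2 s a * T s a s' * \<bar>q1 s' a' - q2 s' a'\<bar>)"
    by (rule sum_swap4[symmetric])
  also have "\<dots> \<le> (\<Sum>s\<in>jS n S. \<Sum>a\<in>jA n A. \<bar>o1 s a - o2 s a\<bar> + o2 s a * C)"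
    by (intro sum_mono inner)
  also have "\<dots> = (\<Sum>s\<in>jS n S. \<Sum>a\<in>jA n A. \<bar>o1 s a - o2 s a\<bar>) + C * (\<Sum>s\<in>jS n S. \<Sum>a\<in>jA n A. o2 s a)"
    by (simp add: sum.distrib sum_distrib_left mult_ac)
  also have "\<dots> = (\<Sum>s\<in>jS n S. \<Sum>a\<in>jA n A. \<bar>o1 s a - o2 s a\<bar>) + C"
    unfolding o2_def using occ_sum[OF p2 s0 a0] by simp
  also have "\<dots> \<le> real t * C + C"
    using Suc.IH unfolding o1_def o2_def by simp
  also have "\<dots> = real (Suc t) * C" by (simp add: algebra_simps)
  finally show ?case .
qed

lemma pol_softmax: "pol (softmax A \<theta>)"
  unfolding pol_def
proof (intro allI impI conjI ballI)
  fix j x assume j: "j < n"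
  have pos: "0 < (\<Sum>b\<in>A j. exp (\<theta> j x b))"
    using A_fin[OF j] by (intro sum_pos) auto
  fix b show "0 \<le> softmax A \<theta> j x b" unfolding softmax_def using pos by simp
next
  fix j x assume j: "j < n"
  have pos: "0 < (\<Sum>b\<in>A j. exp (\<theta> j x b))"
    using A_fin[OF j] by (intro sum_pos) auto
  show "sum (softmax A \<theta> j x) (A j) = 1"
    unfolding softmax_def using pos by (simp add: sum_divide_distrib[symmetric])
qed

lemma pol_explore: "pol \<xi> \<Longrightarrow> 0 \<le> \<epsilon> \<Longrightarrow> \<epsilon> \<le> 1 \<Longrightarrow> pol (explore A \<epsilon> \<xi>)"
  unfolding pol_def
proof (intro allI impI conjI ballI)
  fix j x b assume p: "\<forall>j<n. \<forall>x. (\<forall>b\<in>A j. 0 \<le> \<xi> j x b) \<and> sum (\<xi> j x) (A j) = 1"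
    and e: "0 \<le> \<epsilon>" "\<epsilon> \<le> 1" and j: "j < n" and b: "b \<in> A j"
  show "0 \<le> explore A \<epsilon> \<xi> j x b" unfolding explore_def using p j b e by auto
next
  fix j x assume p: "\<forall>j<n. \<forall>x. (\<forall>b\<in>A j. 0 \<le> \<xi> j x b) \<and> sum (\<xi> j x) (A j) = 1"
    and e: "0 \<le> \<epsilon>" "\<epsilon> \<le> 1" and j: "j < n"
  have c: "card (A j) > 0" using A_fin[OF j] by (simp add: card_gt_0_iff)
  show "sum (explore A \<epsilon> \<xi> j x) (A j) = 1"
    unfolding explore_def using p j c
    by (simp add: sum.distrib sum_distrib_left[symmetric])
qed

lemma explore_L1:
  assumes "pol \<xi>" "0 \<le> \<epsilon>" "j < n"
  shows "(\<Sum>b\<in>A j. \<bar>explore A \<epsilon> \<xi> j x b - \<xi> j x b\<bar>) \<le> 2 * \<epsilon>"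
proof -
  have c: "card (A j) > 0" using A_fin[OF assms(3)] by (simp add: card_gt_0_iff)
  have "(\<Sum>b\<in>A j. \<bar>explore A \<epsilon> \<xi> j x b - \<xi> j x b\<bar>) \<le> (\<Sum>b\<in>A j. \<epsilon> / real (card (A j)) + \<epsilon> * \<xi> j x b)"
  proof (intro sum_mono)
    fix b assume b: "b \<in> A j"
    have "explore A \<epsilon> \<xi> j x b - \<xi> j x b = \<epsilon> / real (card (A j)) - \<epsilon> * \<xi> j x b"
      unfolding explore_def by (simp add: algebra_simps)
    moreover have "0 \<le> \<xi> j x b" using assms b unfolding pol_def by auto
    ultimately show "\<bar>explore A \<epsilon> \<xi> j x b - \<xi> j x b\<bar> \<le> \<epsilon> / real (card (A j)) + \<epsilon> * \<xi> j x b"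
      using assms(2) mult_nonneg_nonneg[of \<epsilon> "\<xi> j x b"] divide_nonneg_nonneg[of \<epsilon> "real (card (A j))"]
      by (simp add: abs_le_iff)
  qed
  also have "\<dots> = 2 * \<epsilon>"
    using assms c unfolding pol_def by (simp add: sum.distrib sum_distrib_left[symmetric])
  finally show ?thesis .
qed

lemma jpol_L1:
  assumes p1: "pol \<xi>1" and p2: "pol \<xi>2" and c: "\<And>j x. j < n \<Longrightarrow> (\<Sum>b\<in>A j. \<bar>\<xi>1 j x b - \<xi>2 j x b\<bar>) \<le> c"
  shows "(\<Sum>a\<in>jA n A. \<bar>jpol n \<xi>1 s a - jpol n \<xi>2 s a\<bar>) \<le> real n * c"
proof -
  have "(\<Sum>a\<in>jA n A. \<bar>jpol n \<xi>1 s a - jpol n \<xi>2 s a\<bar>) \<le> (\<Sum>j\<in>agents n. \<Sum>b\<in>A j. \<bar>\<xi>1 j (s j) b - \<xi>2 j (s j) b\<bar>)"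
    unfolding jpol_def jA_def
    by (rule prod_L1) (use p1 p2 A_fin in \<open>auto simp: agents_def pol_def\<close>)
  also have "\<dots> \<le> (\<Sum>j\<in>agents n. c)"
    by (intro sum_mono c) (auto simp: agents_def)
  also have "\<dots> = real n * c" by (simp add: agents_def)
  finally show ?thesis .
qed

end

lemma series_bound:
  fixes \<gamma> :: real
  assumes "0 < \<gamma>" "\<gamma> < 1" "\<And>t. 0 \<le> f t" "\<And>t. f t \<le> 1"
  shows "summable (\<lambda>t. \<gamma>^t * f t)" "0 \<le> (\<Sum>t. \<gamma>^t * f t)" "(\<Sum>t. \<gamma>^t * f t) \<le> 1/(1-\<gamma>)"
proof -
  have g: "summable (\<lambda>t. \<gamma>^t)" using assms by (intro summable_geometric) auto
  have le: "\<And>t. \<gamma>^t * f t \<le> \<gamma>^t" using assms by (simp add: mult_left_le)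
  show sm: "summable (\<lambda>t. \<gamma>^t * f t)"
    by (rule summable_comparison_test'[OF g, of 0]) (use assms le in auto)
  show "0 \<le> (\<Sum>t. \<gamma>^t * f t)" using assms by (intro suminf_nonneg sm) auto
  have "(\<Sum>t. \<gamma>^t * f t) \<le> (\<Sum>t. \<gamma>^t)" by (intro suminf_le le sm g)
  also have "\<dots> = 1/(1-\<gamma>)" using assms by (simp add: suminf_geometric)
  finally show "(\<Sum>t. \<gamma>^t * f t) \<le> 1/(1-\<gamma>)" .
qed

lemma series_diff:
  fixes \<gamma> :: real
  assumes "0 < \<gamma>" "\<gamma> < 1" "\<And>t. 0 \<le> f t" "\<And>t. f t \<le> 1" "\<And>t. 0 \<le> g t" "\<And>t. g t \<le> 1"
    and d: "\<And>t. \<bar>f t - g t\<bar> \<le> real (Suc t) * K"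
  shows "\<bar>(\<Sum>t. \<gamma>^t * f t) - (\<Sum>t. \<gamma>^t * g t)\<bar> \<le> K / (1-\<gamma>)^2"
proof -
  have sf: "summable (\<lambda>t. \<gamma>^t * f t)" and sg: "summable (\<lambda>t. \<gamma>^t * g t)"
    using series_bound assms by blast+
  have Hs: "(\<lambda>t. K * (of_nat (Suc t) * \<gamma>^t)) sums (K * (1 / (1-\<gamma>)^2))"
    using assms by (intro sums_mult geometric_deriv_sums) auto
  define h where "h = (\<lambda>t. \<gamma>^t * f t - \<gamma>^t * g t)"
  have sh: "summable h" unfolding h_def using sf sg by (rule summable_diff)
  have eq: "(\<Sum>t. \<gamma>^t * f t) - (\<Sum>t. \<gamma>^t * g t) = suminf h"
    unfolding h_def by (simp add: suminf_diff[OF sf sg])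
  have hb: "\<bar>h t\<bar> \<le> K * (of_nat (Suc t) * \<gamma>^t)" for t
  proof -
    have "\<bar>h t\<bar> = \<gamma>^t * \<bar>f t - g t\<bar>" unfolding h_def using assms
      by (simp add: abs_mult right_diff_distrib[symmetric])
    also have "\<dots> \<le> \<gamma>^t * (real (Suc t) * K)" using d[of t] assms by (intro mult_left_mono) auto
    finally show ?thesis by (simp add: mult_ac)
  qed
  define H where "H = (\<lambda>t. K * (of_nat (Suc t) * \<gamma>^t))"
  have sH: "summable H" and vH: "suminf H = K * (1 / (1-\<gamma>)^2)"
    using Hs unfolding H_def by (auto simp: sums_iff)
  have 1: "suminf h \<le> suminf H"
    by (rule suminf_le[OF _ sh sH]) (use hb in \<open>auto simp: H_def abs_le_iff\<close>)
  have "suminf (\<lambda>t. - h t) \<le> suminf H"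
    by (rule suminf_le[OF _ summable_minus[OF sh] sH]) (use hb in \<open>auto simp: H_def abs_le_iff\<close>)
  then have 2: "- suminf h \<le> suminf H" using suminf_minus[OF sh] by simp
  show ?thesis unfolding eq using 1 2 vH by (simp add: abs_le_iff)
qed


context mg
begin

lemma R_bounds:
  assumes p: "pol \<xi>" and s0: "s0 \<in> jS n S" and a0: "a0 \<in> jA n A"
    and rr: "\<And>s a. s \<in> jS n S \<Longrightarrow> a \<in> jA n A \<Longrightarrow> 0 \<le> r i s a \<and> r i s a \<le> 1"
  shows "0 \<le> (\<Sum>s\<in>jS n S. \<Sum>a\<in>jA n A. occ n S A P \<xi> t s0 a0 s a * r i s a)"
    and "(\<Sum>s\<in>jS n S. \<Sum>a\<in>jA n A. occ n S A P \<xi> t s0 a0 s a * r i s a) \<le> 1"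
proof -
  show "0 \<le> (\<Sum>s\<in>jS n S. \<Sum>a\<in>jA n A. occ n S A P \<xi> t s0 a0 s a * r i s a)"
    using rr occ_nonneg[OF p] by (intro sum_nonneg mult_nonneg_nonneg) auto
  have "(\<Sum>s\<in>jS n S. \<Sum>a\<in>jA n A. occ n S A P \<xi> t s0 a0 s a * r i s a)
      \<le> (\<Sum>s\<in>jS n S. \<Sum>a\<in>jA n A. occ n S A P \<xi> t s0 a0 s a)"
    using rr occ_nonneg[OF p] by (intro sum_mono mult_left_le) auto
  also have "\<dots> = 1" by (rule occ_sum[OF p s0 a0])
  finally show "(\<Sum>s\<in>jS n S. \<Sum>a\<in>jA n A. occ n S A P \<xi> t s0 a0 s a * r i s a) \<le> 1" .
qed

lemma R_diff:
  fixes r :: "nat \<Rightarrow> (nat \<Rightarrow> 's) \<Rightarrow> (nat \<Rightarrow> 'a) \<Rightarrow> real"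
  assumes rr: "\<And>s a. s \<in> jS n S \<Longrightarrow> a \<in> jA n A \<Longrightarrow> 0 \<le> r i s a \<and> r i s a \<le> 1"
  shows "\<bar>(\<Sum>s\<in>jS n S. \<Sum>a\<in>jA n A. o1 s a * r i s a) - (\<Sum>s\<in>jS n S. \<Sum>a\<in>jA n A. o2 s a * r i s a)\<bar>
     \<le> (\<Sum>s\<in>jS n S. \<Sum>a\<in>jA n A. \<bar>o1 s a - o2 s a\<bar>)"
proof -
  have "(\<Sum>s\<in>jS n S. \<Sum>a\<in>jA n A. o1 s a * r i s a) - (\<Sum>s\<in>jS n S. \<Sum>a\<in>jA n A. o2 s a * r i s a)
     = (\<Sum>s\<in>jS n S. \<Sum>a\<in>jA n A. (o1 s a - o2 s a) * r i s a)"
    by (simp only: left_diff_distrib sum_subtractf)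
  also have "\<bar>\<dots>\<bar> \<le> (\<Sum>s\<in>jS n S. \<bar>\<Sum>a\<in>jA n A. (o1 s a - o2 s a) * r i s a\<bar>)"
    by (rule sum_abs)
  also have "\<dots> \<le> (\<Sum>s\<in>jS n S. \<Sum>a\<in>jA n A. \<bar>(o1 s a - o2 s a) * r i s a\<bar>)"
    by (intro sum_mono sum_abs)
  also have "\<dots> \<le> (\<Sum>s\<in>jS n S. \<Sum>a\<in>jA n A. \<bar>o1 s a - o2 s a\<bar>)"
  proof (intro sum_mono)
    fix s a assume "s \<in> jS n S" "a \<in> jA n A"
    then show "\<bar>(o1 s a - o2 s a) * r i s a\<bar> \<le> \<bar>o1 s a - o2 s a\<bar>"
      using rr[of s a] by (simp add: abs_mult mult_left_le)
  qed
  finally show ?thesis .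
qed

lemma Qfun_bounds:
  assumes p: "pol \<xi>" and s0: "s0 \<in> jS n S" and a0: "a0 \<in> jA n A"
    and rr: "\<And>s a. s \<in> jS n S \<Longrightarrow> a \<in> jA n A \<Longrightarrow> 0 \<le> r i s a \<and> r i s a \<le> 1"
    and g: "0 < \<gamma>" "\<gamma> < 1"
  shows "0 \<le> Qfun n S A P r \<gamma> \<xi> i s0 a0" "Qfun n S A P r \<gamma> \<xi> i s0 a0 \<le> 1/(1-\<gamma>)"
  unfolding Qfun_def using series_bound[OF g, of "\<lambda>t. \<Sum>s\<in>jS n S. \<Sum>a\<in>jA n A. occ n S A P \<xi> t s0 a0 s a * r i s a"]
    R_bounds[where r=r and i=i, OF p s0 a0 rr] by auto

lemma Qfun_diff:
  assumes p1: "pol \<xi>1" and p2: "pol \<xi>2" and s0: "s0 \<in> jS n S" and a0: "a0 \<in> jA n A"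
    and C: "\<And>s. (\<Sum>a\<in>jA n A. \<bar>jpol n \<xi>1 s a - jpol n \<xi>2 s a\<bar>) \<le> C"
    and rr: "\<And>s a. s \<in> jS n S \<Longrightarrow> a \<in> jA n A \<Longrightarrow> 0 \<le> r i s a \<and> r i s a \<le> 1"
    and g: "0 < \<gamma>" "\<gamma> < 1"
  shows "\<bar>Qfun n S A P r \<gamma> \<xi>1 i s0 a0 - Qfun n S A P r \<gamma> \<xi>2 i s0 a0\<bar> \<le> C / (1-\<gamma>)^2"
  unfolding Qfun_def
proof (rule series_diff[OF g])
  have C0: "0 \<le> C" using C[of undefined] by (meson order.trans sum_nonneg abs_ge_zero)
  fix t
  show "\<bar>(\<Sum>s\<in>jS n S. \<Sum>a\<in>jA n A. occ n S A P \<xi>1 t s0 a0 s a * r i s a) -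
         (\<Sum>s\<in>jS n S. \<Sum>a\<in>jA n A. occ n S A P \<xi>2 t s0 a0 s a * r i s a)\<bar> \<le> real (Suc t) * C"
    using order.trans[OF R_diff[where r=r and i=i, OF rr] occ_L1[OF p1 p2 s0 a0 C, of t]] C0
    by (meson mult_right_mono of_nat_le_iff le_SucI order.refl order.trans)
qed (use R_bounds[where r=r and i=i, OF p1 s0 a0 rr] R_bounds[where r=r and i=i, OF p2 s0 a0 rr] in auto)


lemma Qbar_diff:
  fixes r :: "nat \<Rightarrow> (nat \<Rightarrow> 's) \<Rightarrow> (nat \<Rightarrow> 'a) \<Rightarrow> real"
  assumes p1: "pol \<xi>1" and p2: "pol \<xi>2" and i: "i < n" and s: "s \<in> jS n S" and ai: "ai \<in> A i"
    and c: "\<And>j x. j < n \<Longrightarrow> (\<Sum>b\<in>A j. \<bar>\<xi>1 j x b - \<xi>2 j x b\<bar>) \<le> c"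
    and rr: "\<And>s a. s \<in> jS n S \<Longrightarrow> a \<in> jA n A \<Longrightarrow> 0 \<le> r i s a \<and> r i s a \<le> 1"
    and g: "0 < \<gamma>" "\<gamma> < 1"
  shows "\<bar>Qbar n S A P r \<gamma> \<xi>1 i s ai - Qbar n S A P r \<gamma> \<xi>2 i s ai\<bar>
           \<le> real n * c / (1-\<gamma>)^2 + 1/(1-\<gamma>) * (real n * c)"
proof -
  have c0: "0 \<le> c" using c[OF i, of undefined] by (meson order.trans sum_nonneg abs_ge_zero)
  define B where "B = A(i:={ai})"
  define W where "W = PiE (agents n) B"
  define pp :: "(nat \<Rightarrow> 's \<Rightarrow> 'a \<Rightarrow> real) \<Rightarrow> nat \<Rightarrow> 'a \<Rightarrow> real"
    where "pp = (\<lambda>\<xi> j b. if j = i then 1 else \<xi> j (s j) b)"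
  have Weq: "{a \<in> jA n A. a i = ai} = W"
    unfolding W_def B_def jA_def using i ai by (auto simp: PiE_iff agents_def extensional_def split: if_splits)
  have WjA: "W \<subseteq> jA n A"
    unfolding W_def B_def jA_def using i ai by (auto simp: PiE_iff agents_def extensional_def split: if_splits)
  have finB: "\<And>j. j \<in> agents n \<Longrightarrow> finite (B j)"
    unfolding B_def using A_fin by (auto simp: agents_def)
  have prodeq: "(\<Prod>j\<in>agents n - {i}. \<xi> j (s j) (a j)) = (\<Prod>j\<in>agents n. pp \<xi> j (a j))" for \<xi> a
  proof -
    have "(\<Prod>j\<in>agents n. pp \<xi> j (a j)) = pp \<xi> i (a i) * (\<Prod>j\<in>agents n - {i}. pp \<xi> j (a j))"
      by (rule prod.remove) (use i in \<open>auto simp: agents_def\<close>)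
    also have "\<dots> = (\<Prod>j\<in>agents n - {i}. \<xi> j (s j) (a j))"
      by (auto simp: pp_def intro!: prod.cong)
    finally show ?thesis by simp
  qed
  define w1 where "w1 = (\<lambda>a. \<Prod>j\<in>agents n. pp \<xi>1 j (a j))"
  define w2 where "w2 = (\<lambda>a. \<Prod>j\<in>agents n. pp \<xi>2 j (a j))"
  define Q1 where "Q1 = Qfun n S A P r \<gamma> \<xi>1 i s"
  define Q2 where "Q2 = Qfun n S A P r \<gamma> \<xi>2 i s"
  have Qb1: "Qbar n S A P r \<gamma> \<xi>1 i s ai = (\<Sum>a\<in>W. w1 a * Q1 a)"
    unfolding Qbar_def Weq w1_def Q1_def prodeq ..
  have Qb2: "Qbar n S A P r \<gamma> \<xi>2 i s ai = (\<Sum>a\<in>W. w2 a * Q2 a)"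
    unfolding Qbar_def Weq w2_def Q2_def prodeq ..
  have ppnn: "\<And>j b. j \<in> agents n \<Longrightarrow> b \<in> B j \<Longrightarrow> 0 \<le> pp \<xi> j b" if "pol \<xi>" for \<xi>
    using that unfolding pp_def B_def pol_def by (auto simp: agents_def)
  have ppsum: "\<And>j. j \<in> agents n \<Longrightarrow> sum (pp \<xi> j) (B j) = 1" if "pol \<xi>" for \<xi>
  proof -
    fix j assume j: "j \<in> agents n"
    show "sum (pp \<xi> j) (B j) = 1"
    proof (cases "j = i")
      case True then show ?thesis unfolding pp_def B_def by simp
    next
      case False
      then have "sum (pp \<xi> j) (B j) = sum (\<xi> j (s j)) (A j)"
        unfolding pp_def B_def by simp
      then show ?thesis using that j unfolding pol_def by (auto simp: agents_def)
    qed
  qed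
  have w1nn: "\<And>a. a \<in> W \<Longrightarrow> 0 \<le> w1 a"
    unfolding w1_def W_def using ppnn[OF p1] by (auto intro!: prod_nonneg simp: PiE_iff)
  have w1sum: "(\<Sum>a\<in>W. w1 a) = 1"
    unfolding w1_def W_def
    by (subst prod_sum_PiE[symmetric]) (use finB ppsum[OF p1] in \<open>auto simp: agents_def intro!: prod.neutral\<close>)
  have L1: "(\<Sum>a\<in>W. \<bar>w1 a - w2 a\<bar>) \<le> real n * c"
  proof -
    have "(\<Sum>a\<in>W. \<bar>w1 a - w2 a\<bar>) \<le> (\<Sum>j\<in>agents n. \<Sum>b\<in>B j. \<bar>pp \<xi>1 j b - pp \<xi>2 j b\<bar>)"
      unfolding w1_def w2_def W_def
      by (rule prod_L1) (use finB ppnn[OF p1] ppnn[OF p2] ppsum[OF p1] ppsum[OF p2] in \<open>auto simp: agents_def\<close>)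
    also have "\<dots> \<le> (\<Sum>j\<in>agents n. c)"
    proof (intro sum_mono)
      fix j assume j: "j \<in> agents n"
      show "(\<Sum>b\<in>B j. \<bar>pp \<xi>1 j b - pp \<xi>2 j b\<bar>) \<le> c"
      proof (cases "j = i")
        case True then show ?thesis unfolding pp_def B_def using c0 by simp
      next
        case False
        then show ?thesis unfolding pp_def B_def using c[of j "s j"] j by (simp add: agents_def)
      qed
    qed
    also have "\<dots> = real n * c" by (simp add: agents_def)
    finally show ?thesis .
  qed
  have D: "\<And>a. a \<in> W \<Longrightarrow> \<bar>Q1 a - Q2 a\<bar> \<le> real n * c / (1-\<gamma>)^2"
    unfolding Q1_def Q2_def using WjA
    by (intro Qfun_diff[where r=r and i=i, OF p1 p2 s _ _ rr g] jpol_L1[OF p1 p2 c]) auto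
  have Q2b: "\<And>a. a \<in> W \<Longrightarrow> 0 \<le> Q2 a \<and> Q2 a \<le> 1/(1-\<gamma>)"
    unfolding Q2_def using WjA Qfun_bounds[where r=r and i=i, OF p2 s _ rr g] by auto
  have "(\<Sum>a\<in>W. w1 a * Q1 a) - (\<Sum>a\<in>W. w2 a * Q2 a) = (\<Sum>a\<in>W. w1 a * (Q1 a - Q2 a) + (w1 a - w2 a) * Q2 a)"
    by (simp add: sum_subtractf[symmetric] algebra_simps)
  also have "\<bar>\<dots>\<bar> \<le> (\<Sum>a\<in>W. \<bar>w1 a * (Q1 a - Q2 a) + (w1 a - w2 a) * Q2 a\<bar>)"
    by (rule sum_abs)
  also have "\<dots> \<le> (\<Sum>a\<in>W. w1 a * (real n * c / (1-\<gamma>)^2) + \<bar>w1 a - w2 a\<bar> * (1/(1-\<gamma>)))"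
  proof (intro sum_mono)
    fix a assume a: "a \<in> W"
    have "\<bar>w1 a * (Q1 a - Q2 a)\<bar> \<le> w1 a * (real n * c / (1-\<gamma>)^2)"
      using mult_left_mono[OF D[OF a] w1nn[OF a]] w1nn[OF a] by (simp add: abs_mult)
    moreover have "\<bar>(w1 a - w2 a) * Q2 a\<bar> \<le> \<bar>w1 a - w2 a\<bar> * (1/(1-\<gamma>))"
      using mult_left_mono[of "Q2 a" "1/(1-\<gamma>)" "\<bar>w1 a - w2 a\<bar>"] Q2b[OF a] by (simp add: abs_mult)
    ultimately show "\<bar>w1 a * (Q1 a - Q2 a) + (w1 a - w2 a) * Q2 a\<bar>
        \<le> w1 a * (real n * c / (1-\<gamma>)^2) + \<bar>w1 a - w2 a\<bar> * (1/(1-\<gamma>))"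
      by (meson abs_triangle_ineq add_mono order.trans)
  qed
  also have "\<dots> = (\<Sum>a\<in>W. w1 a) * (real n * c / (1-\<gamma>)^2) + 1/(1-\<gamma>) * (\<Sum>a\<in>W. \<bar>w1 a - w2 a\<bar>)"
    by (simp add: sum.distrib sum_distrib_left sum_distrib_right mult_ac sum_divide_distrib)
  also have "\<dots> \<le> real n * c / (1-\<gamma>)^2 + 1/(1-\<gamma>) * (real n * c)"
    using L1 g w1sum by (simp add: divide_right_mono)
  finally show ?thesis unfolding Qb1 Qb2 .
qed

end

theorem mainTheorem15:
  fixes n :: nat and E :: "nat \<Rightarrow> nat \<Rightarrow> bool"
    and S :: "nat \<Rightarrow> 's set" and A :: "nat \<Rightarrow> 'a set"
    and P :: "nat \<Rightarrow> (nat \<Rightarrow> 's) \<Rightarrow> 'a \<Rightarrow> 's \<Rightarrow> real"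
    and r :: "nat \<Rightarrow> (nat \<Rightarrow> 's) \<Rightarrow> (nat \<Rightarrow> 'a) \<Rightarrow> real"
    and \<kappa>r :: nat and \<gamma> \<epsilon> :: real and \<theta> :: "nat \<Rightarrow> 's \<Rightarrow> 'a \<Rightarrow> real" and i :: nat
  assumes E_sym: "\<And>x y. E x y \<Longrightarrow> E y x"
    and S_fin: "\<And>j. j < n \<Longrightarrow> finite (S j) \<and> S j \<noteq> {}"
    and A_fin: "\<And>j. j < n \<Longrightarrow> finite (A j) \<and> A j \<noteq> {}"
    and P_nonneg: "\<And>j s b x. j < n \<Longrightarrow> s \<in> jS n S \<Longrightarrow> b \<in> A j \<Longrightarrow> x \<in> S j \<Longrightarrow> P j s b x \<ge> 0"
    and P_sum: "\<And>j s b. j < n \<Longrightarrow> s \<in> jS n S \<Longrightarrow> b \<in> A j \<Longrightarrow> (\<Sum>x\<in>S j. P j s b x) = 1"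
    and P_local: "\<And>j s s' b x. j < n \<Longrightarrow> s \<in> jS n S \<Longrightarrow> s' \<in> jS n S
        \<Longrightarrow> (\<forall>k\<in>nbhd n E 1 j. s k = s' k) \<Longrightarrow> P j s b x = P j s' b x"
    and r_range: "\<And>j s a. j < n \<Longrightarrow> s \<in> jS n S \<Longrightarrow> a \<in> jA n A \<Longrightarrow> 0 \<le> r j s a \<and> r j s a \<le> 1"
    and r_local: "\<And>j s s' a a'. j < n \<Longrightarrow> s \<in> jS n S \<Longrightarrow> s' \<in> jS n S \<Longrightarrow> a \<in> jA n A \<Longrightarrow> a' \<in> jA n A
        \<Longrightarrow> (\<forall>k\<in>nbhd n E \<kappa>r j. s k = s' k \<and> a k = a' k) \<Longrightarrow> r j s a = r j s' a'"
    and gamma: "0 < \<gamma>" "\<gamma> < 1"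
    and eps: "0 \<le> \<epsilon>" "\<epsilon> \<le> 1"
    and i: "i < n"
  shows "\<forall>s\<in>jS n S. \<forall>ai\<in>A i.
           \<bar>Qbar n S A P r \<gamma> (explore A \<epsilon> (softmax A \<theta>)) i s ai
             - Qbar n S A P r \<gamma> (softmax A \<theta>) i s ai\<bar>
           \<le> 6 * real n * \<epsilon> / (1 - \<gamma>)\<^sup>2"
proof -
  interpret mg n S A P using S_fin A_fin P_nonneg P_sum by unfold_locales auto
  have ps: "pol (softmax A \<theta>)" by (rule pol_softmax)
  have pe: "pol (explore A \<epsilon> (softmax A \<theta>))" using ps eps by (rule pol_explore)
  have c: "\<And>j x. j < n \<Longrightarrow> (\<Sum>b\<in>A j. \<bar>explore A \<epsilon> (softmax A \<theta>) j x b - softmax A \<theta> j x b\<bar>) \<le> 2 * \<epsilon>"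
    using explore_L1[OF ps eps(1)] by blast
  have X0: "0 \<le> real n * (2 * \<epsilon>)" using eps by simp
  have d: "0 < 1 - \<gamma>" "1 - \<gamma> < 1" using gamma by auto
  have h1: "1/(1-\<gamma>) \<le> 1/(1-\<gamma>)^2"
  proof -
    have "(1-\<gamma>)^2 \<le> 1 - \<gamma>" using d by (simp add: power2_eq_square mult_left_le)
    then show ?thesis using d by (intro divide_left_mono) auto
  qed
  have arith: "real n * (2*\<epsilon>) / (1-\<gamma>)^2 + 1/(1-\<gamma>) * (real n * (2*\<epsilon>)) \<le> 6 * real n * \<epsilon> / (1 - \<gamma>)\<^sup>2"
  proof -
    have "1/(1-\<gamma>) * (real n * (2*\<epsilon>)) \<le> 1/(1-\<gamma>)^2 * (real n * (2*\<epsilon>))"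
      using h1 X0 by (rule mult_right_mono)
    moreover have "real n * (2*\<epsilon>) / (1-\<gamma>)^2 + 1/(1-\<gamma>)^2 * (real n * (2*\<epsilon>)) \<le> 6 * real n * \<epsilon> / (1 - \<gamma>)\<^sup>2"
      using d eps by (simp add: divide_simps)
    ultimately show ?thesis by linarith
  qed
  show ?thesis
  proof (intro ballI)
    fix s ai assume s: "s \<in> jS n S" and ai: "ai \<in> A i"
    show "\<bar>Qbar n S A P r \<gamma> (explore A \<epsilon> (softmax A \<theta>)) i s ai - Qbar n S A P r \<gamma> (softmax A \<theta>) i s ai\<bar>
           \<le> 6 * real n * \<epsilon> / (1 - \<gamma>)\<^sup>2"
      using Qbar_diff[where r=r and i=i, OF pe ps i s ai c r_range[OF i] gamma] arith by linarith
  qed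
qed

end
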